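(* In the setting described in the context, $\frac{qAB-q^{-1}BA}{q-q^{-1}}=abI$, $\frac{qBA^*-q^{-1}A^*B}{q-q^{-1}}=a^*bI$, $\frac{qA^*B^*-q^{-1}B^*A^*}{q-q^{-1}}=a^*b^*I$, $\frac{qB^*A-q^{-1}AB^*}{q-q^{-1}}=ab^*I$.
   Context: $\mathbb K$ is an algebraically closed field, $q\in\mathbb K$ nonzero and not a root of unity, $V$ a nonzero finite-dimensional $\mathbb K$-vector space. A tridiagonal pair on $V$ is an ordered pair $A,A^*$ of linear maps $V\to V$ such that: (i) each of $A,A^*$ is diagonalizable; (ii) there is an ordering $V_0,\dots,V_d$ of the eigenspaces of $A$ with $A^*V_i\subseteq V_{i-1}+V_i+V_{i+1}$ ($V_{-1}=V_{d+1}=0$); (iii) there is an ordering $V^*_0,\dots,V^*_\delta$ of the eigenspaces of $A^*$ with $AV^*_i\subseteq V^*_{i-1}+V^*_i+V^*_{i+1}$ ($V^*_{-1}=V^*_{\delta+1}=0$); (iv) no subspace $W\ne0,V$ satisfies $AW\subseteq W$, $A^*W\subseteq W$. It is known $d=\delta$; orderings as in (ii),(iii) are called standard. Setting: $A,A^*$ is a tridiagonal pair on $V$; $V_0,\dots,V_d$ (resp. $V^*_0,\dots,V^*_d$) is a standard ordering of the eigenspaces of $A$ (resp. $A^*$); the eigenvalue of $A$ on $V_i$ is $aq^{2i-d}$ and that of $A^*$ on $V^*_i$ is $a^*q^{d-2i}$ ($0\le i\le d$) for some nonzero $a,a^*\in\mathbb K$; $b,b^*\in\mathbb K$ are nonzero.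 For $0\le i\le d$ the subspaces $(V^*_0+\cdots+V^*_i)\cap(V_0+\cdots+V_{d-i})$ form a decomposition of $V$ (their sum is direct, equals $V$, each is nonzero), as do the subspaces $(V^*_{d-i}+\cdots+V^*_d)\cap(V_i+\cdots+V_d)$. $B:V\to V$ is the linear map acting as $bq^{2i-d}I$ on $(V^*_0+\cdots+V^*_i)\cap(V_0+\cdots+V_{d-i})$ for each $i$, and $B^*:V\to V$ is the linear map acting as $b^*q^{d-2i}I$ on $(V^*_{d-i}+\cdots+V^*_d)\cap(V_i+\cdots+V_d)$ for each $i$. *)

theory Defs
  imports Main "HOL-Computational_Algebra.Polynomial"
begin

definition alg_closed_field :: "'k::field itself \<Rightarrow> bool" where
  "alg_closed_field _ \<longleftrightarrow> (\<forall>p::'k poly. degree p > 0 \<longrightarrow> (\<exists>x. poly p x = 0))"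

definition eigenspace :: "('k::field \<Rightarrow> 'v::ab_group_add \<Rightarrow> 'v) \<Rightarrow> ('v \<Rightarrow> 'v) \<Rightarrow> 'k \<Rightarrow> 'v set" where
  "eigenspace scale A \<theta> = {v. A v = scale \<theta> v}"

definition eigenspaces :: "('k::field \<Rightarrow> 'v::ab_group_add \<Rightarrow> 'v) \<Rightarrow> ('v \<Rightarrow> 'v) \<Rightarrow> 'v set set" where
  "eigenspaces scale A = {eigenspace scale A \<theta> | \<theta>. eigenspace scale A \<theta> \<noteq> {0}}"

definition diagonalizable :: "('k::field \<Rightarrow> 'v::ab_group_add \<Rightarrow> 'v) \<Rightarrow> ('v \<Rightarrow> 'v) \<Rightarrow> bool" where
  "diagonalizable scale A \<longleftrightarrow> Vector_Spaces.linear scale scale A \<and>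
     module.span scale (\<Union>(eigenspaces scale A)) = UNIV"

definition standard_ordering ::
  "('k::field \<Rightarrow> 'v::ab_group_add \<Rightarrow> 'v) \<Rightarrow> ('v \<Rightarrow> 'v) \<Rightarrow> ('v \<Rightarrow> 'v) \<Rightarrow> nat \<Rightarrow> (nat \<Rightarrow> 'v set) \<Rightarrow> bool" where
  "standard_ordering scale A B d Vs \<longleftrightarrow>
     inj_on Vs {0..d} \<and> Vs ` {0..d} = eigenspaces scale A \<and>
     (\<forall>i\<le>d. B ` Vs i \<subseteq> module.span scale
        ((if 0 < i then Vs (i - 1) else {}) \<union> Vs i \<union> (if i < d then Vs (i + 1) else {})))"

definition tridiagonal_pair ::
  "('k::field \<Rightarrow> 'v::ab_group_add \<Rightarrow> 'v) \<Rightarrow> ('v \<Rightarrow> 'v) \<Rightarrow> ('v \<Rightarrow> 'v) \<Rightarrow> bool" where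
  "tridiagonal_pair scale A As \<longleftrightarrow>
     diagonalizable scale A \<and> diagonalizable scale As \<and>
     (\<exists>d Vs. standard_ordering scale A As d Vs) \<and>
     (\<exists>\<delta> Vss. standard_ordering scale As A \<delta> Vss) \<and>
     (\<forall>W. module.subspace scale W \<and> A ` W \<subseteq> W \<and> As ` W \<subseteq> W \<longrightarrow> W = {0} \<or> W = UNIV)"

definition is_decomposition ::
  "('k::field \<Rightarrow> 'v::ab_group_add \<Rightarrow> 'v) \<Rightarrow> nat \<Rightarrow> (nat \<Rightarrow> 'v set) \<Rightarrow> bool" where
  "is_decomposition scale d Ws \<longleftrightarrow>
     (\<forall>i\<le>d. Ws i \<noteq> {0}) \<and>
     module.span scale (\<Union>i\<le>d. Ws i) = UNIV \<and>
     (\<forall>vs. (\<forall>i\<le>d. vs i \<in> Ws i) \<and> (\<Sum>i\<le>d. vs i) = 0 \<longrightarrow> (\<forall>i\<le>d. vs i = 0))"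

end

theory Submission
  imports Defs
begin

lemma pw1:
  fixes q a b :: "'k::field"
  assumes "q \<noteq> 0" "x + y = 0"
  shows "a * q powi x * (b * q powi y) = a * b"
proof -
  have "q powi x * q powi y = 1" using power_int_add[of q x y] assms by simp
  then have "a * q powi x * (b * q powi y) = a * b * (q powi x * q powi y)" by (simp add: ac_simps)
  with \<open>q powi x * q powi y = 1\<close> show ?thesis by simp
qed

lemma pw2:
  fixes q b :: "'k::field"
  assumes "q \<noteq> 0" "y = x + 2"
  shows "q * (b * q powi x) = inverse q * (b * q powi y)"
proof -
  have yy: "y = (x + 1) + 1" using assms by simp
  have e1: "q powi (x + 1) = q powi x * q" by (rule power_int_add_1) (simp add: assms)
  have e2: "q powi ((x + 1) + 1) = q powi (x + 1) * q" by (rule power_int_add_1) (simp add: assms)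
  have "q powi y = q powi x * q * q" by (simp only: yy e2 e1)
  then show ?thesis using assms by (simp add: field_simps)
qed

lemma nb_sub:
  assumes "\<forall>j\<in>J. (0 < j \<longrightarrow> j - 1 \<in> J') \<and> j \<in> J' \<and> (j < d \<longrightarrow> j + 1 \<in> J')"
  shows "\<forall>j\<in>J. (if 0 < j then V (j - 1) else {}) \<union> V j \<union> (if j < d then V (j + 1) else {})
           \<subseteq> (\<Union>k\<in>J'. V k)"
proof (intro ballI)
  fix j assume j: "j \<in> J"
  have "(if 0 < j then V (j - 1) else {}) \<subseteq> (\<Union>k\<in>J'. V k)"
    using assms j by (cases "0 < j") auto
  moreover have "V j \<subseteq> (\<Union>k\<in>J'. V k)" using assms j by auto
  moreover have "(if j < d then V (j + 1) else {}) \<subseteq> (\<Union>k\<in>J'. V k)"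
    using assms j by (cases "j < d") auto
  ultimately show "(if 0 < j then V (j - 1) else {}) \<union> V j \<union> (if j < d then V (j + 1) else {})
           \<subseteq> (\<Union>k\<in>J'. V k)" by (simp only: Un_least)
qed

context vector_space
begin

lemma kill_lemma:
  assumes lin: "Vector_Spaces.linear scale scale X"
    and eig: "\<forall>j\<in>J. \<forall>v\<in>V j. X v = scale (t j) v"
    and kc: "\<forall>j\<in>J. j = k \<longrightarrow> t j = c"
    and k: "\<forall>j\<in>J. j \<noteq> k \<longrightarrow> j \<in> J'"
    and v: "v \<in> span (\<Union>j\<in>J. V j)"
  shows "X v - scale c v \<in> span (\<Union>j\<in>J'. V j)"
proof -
  interpret X: Vector_Spaces.linear scale scale X by fact
  have sub: "subspace {v. X v - scale c v \<in> span (\<Union>j\<in>J'. V j)}"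
    unfolding subspace_def
  proof (intro conjI allI impI ballI)
    show "0 \<in> {v. X v - scale c v \<in> span (\<Union>j\<in>J'. V j)}" by (simp add: span_zero)
  next
    fix x y assume "x \<in> {v. X v - scale c v \<in> span (\<Union>j\<in>J'. V j)}"
      "y \<in> {v. X v - scale c v \<in> span (\<Union>j\<in>J'. V j)}"
    then have "(X x - scale c x) + (X y - scale c y) \<in> span (\<Union>j\<in>J'. V j)"
      by (simp add: span_add)
    then show "x + y \<in> {v. X v - scale c v \<in> span (\<Union>j\<in>J'. V j)}"
      by (simp add: X.add scale_right_distrib algebra_simps)
  next
    fix r x assume "x \<in> {v. X v - scale c v \<in> span (\<Union>j\<in>J'. V j)}"
    then have "scale r (X x - scale c x) \<in> span (\<Union>j\<in>J'. V j)"
      by (simp add: span_scale)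
    then show "scale r x \<in> {v. X v - scale c v \<in> span (\<Union>j\<in>J'. V j)}"
      by (simp add: X.scale scale_right_diff_distrib mult.commute)
  qed
  show ?thesis
    using v
  proof (induct rule: span_induct)
    case base show ?case using sub by simp
  next
    case (step x)
    then obtain j where j: "j \<in> J" "x \<in> V j" by blast
    then have "X x - scale c x = scale (t j - c) x" using eig by (simp add: scale_left_diff_distrib)
    moreover have "scale (t j - c) x \<in> span (\<Union>j\<in>J'. V j)"
    proof (cases "j = k")
      case True then show ?thesis using kc j by (simp add: span_zero)
    next
      case False then have "j \<in> J'" using k j by blast
      then show ?thesis using j by (blast intro: span_scale span_base)
    qed
    ultimately show ?case by simp
  qed
qed

lemma image_lemma:
  assumes lin: "Vector_Spaces.linear scale scale X"
    and im: "\<forall>j\<in>J. X ` V j \<subseteq> span (S j)"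
    and sub: "\<forall>j\<in>J. S j \<subseteq> T"
    and v: "v \<in> span (\<Union>j\<in>J. V j)"
  shows "X v \<in> span T"
proof -
  interpret X: Vector_Spaces.linear scale scale X by fact
  have s: "subspace {v. X v \<in> span T}"
    unfolding subspace_def
    by (auto simp: X.add X.scale span_zero span_add span_scale)
  show ?thesis
    using v
  proof (induct rule: span_induct)
    case base show ?case using s by simp
  next
    case (step x)
    then obtain j where j: "j \<in> J" "x \<in> V j" by blast
    then have "X x \<in> span (S j)" using im by blast
    moreover have "span (S j) \<subseteq> span T" using sub j by (simp add: span_mono)
    ultimately show ?case by blast
  qed
qed

lemma flip_lemma:
  assumes "scale p x - scale p' y = scale ((p - p') * c) v"
  shows "scale p' y - scale p x = scale ((p' - p) * c) v"
proof -
  have "scale p' y - scale p x = - (scale p x - scale p' y)" by simp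
  also have "\<dots> = - scale ((p - p') * c) v" by (simp only: assms)
  also have "\<dots> = scale (- ((p - p') * c)) v" by (simp only: scale_minus_left)
  also have "- ((p - p') * c) = (p' - p) * c" by (simp add: algebra_simps)
  finally show ?thesis .
qed

lemma qcomm_gen:
  assumes linX: "Vector_Spaces.linear scale scale X"
    and linY: "Vector_Spaces.linear scale scale Y"
    and sp: "span (\<Union>i\<le>d. U i) = UNIV"
    and H: "\<And>i u. i \<le> d \<Longrightarrow> u \<in> U i \<Longrightarrow> Y u = scale (\<beta> i) u \<and>
               Y (X u - scale (\<alpha> i) u) = scale (\<gamma> i) (X u - scale (\<alpha> i) u)"
    and E: "\<And>i. i \<le> d \<Longrightarrow> \<alpha> i * \<beta> i = c \<and> p * \<beta> i = p' * \<gamma> i"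
  shows "scale p (X (Y v)) - scale p' (Y (X v)) = scale ((p - p') * c) v"
proof -
  interpret X: Vector_Spaces.linear scale scale X by fact
  interpret Y: Vector_Spaces.linear scale scale Y by fact
  have s: "subspace {v. scale p (X (Y v)) - scale p' (Y (X v)) = scale ((p - p') * c) v}"
    unfolding subspace_def
  proof (intro conjI allI impI ballI)
    fix r x assume "x \<in> {v. scale p (X (Y v)) - scale p' (Y (X v)) = scale ((p - p') * c) v}"
    then have h: "scale p (X (Y x)) - scale p' (Y (X x)) = scale ((p - p') * c) x" by simp
    have "scale p (X (Y (scale r x))) - scale p' (Y (X (scale r x)))
        = scale p (scale r (X (Y x))) - scale p' (scale r (Y (X x)))"
      by (simp only: X.scale Y.scale)
    also have "\<dots> = scale r (scale p (X (Y x)) - scale p' (Y (X x)))"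
      by (simp only: scale_left_commute[of p r] scale_left_commute[of p' r] scale_right_diff_distrib)
    also have "\<dots> = scale ((p - p') * c) (scale r x)"
      by (simp only: h scale_left_commute)
    finally show "scale r x \<in> {v. scale p (X (Y v)) - scale p' (Y (X v)) = scale ((p - p') * c) v}"
      by simp
  next
    fix x y assume "x \<in> {v. scale p (X (Y v)) - scale p' (Y (X v)) = scale ((p - p') * c) v}"
       "y \<in> {v. scale p (X (Y v)) - scale p' (Y (X v)) = scale ((p - p') * c) v}"
    then have h1: "scale p (X (Y x)) - scale p' (Y (X x)) = scale ((p - p') * c) x"
      and h2: "scale p (X (Y y)) - scale p' (Y (X y)) = scale ((p - p') * c) y" by simp_all
    have "scale p (X (Y (x + y))) - scale p' (Y (X (x + y)))
       = (scale p (X (Y x)) - scale p' (Y (X x))) + (scale p (X (Y y)) - scale p' (Y (X y)))"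
      by (simp add: X.add Y.add scale_right_distrib)
    also have "\<dots> = scale ((p - p') * c) (x + y)" by (simp only: h1 h2 scale_right_distrib)
    finally show "x + y \<in> {v. scale p (X (Y v)) - scale p' (Y (X v)) = scale ((p - p') * c) v}"
      by simp
  qed simp
  have "v \<in> span (\<Union>i\<le>d. U i)" using sp by simp
  then show ?thesis
  proof (induct rule: span_induct)
    case base show ?case using s by simp
  next
    case (step u)
    then obtain i where i: "i \<le> d" "u \<in> U i" by blast
    define w where "w = X u - scale (\<alpha> i) u"
    have Xu: "X u = scale (\<alpha> i) u + w" unfolding w_def by simp
    have Yu: "Y u = scale (\<beta> i) u" and Yw: "Y w = scale (\<gamma> i) w"
      using H[OF i] unfolding w_def by auto
    have c: "c = \<alpha> i * \<beta> i" and pq: "p * \<beta> i = p' * \<gamma> i" using E[OF i(1)] by auto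
    have XY: "scale p (X (Y u)) = scale (p * (\<beta> i * \<alpha> i)) u + scale (p * \<beta> i) w"
      by (simp only: Yu X.scale Xu scale_right_distrib scale_scale)
    have YX: "scale p' (Y (X u)) = scale (p' * (\<alpha> i * \<beta> i)) u + scale (p' * \<gamma> i) w"
      by (simp only: Xu Y.add Y.scale Yu Yw scale_right_distrib scale_scale)
    have gr: "(a1 + b1) - (a2 + b2) = (a1 - a2) + (b1 - b2)" for a1 b1 a2 b2 :: 'b
      by (simp add: algebra_simps)
    have "scale p (X (Y u)) - scale p' (Y (X u))
        = (scale (p * (\<beta> i * \<alpha> i)) u - scale (p' * (\<alpha> i * \<beta> i)) u)
          + (scale (p * \<beta> i) w - scale (p' * \<gamma> i) w)"
      by (simp only: XY YX gr)
    also have "\<dots> = scale ((p - p') * c) u"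
    proof -
      have "scale (p * \<beta> i) w - scale (p' * \<gamma> i) w = 0" by (simp only: pq diff_self)
      moreover have "scale (p * (\<beta> i * \<alpha> i)) u - scale (p' * (\<alpha> i * \<beta> i)) u
          = scale ((p - p') * c) u"
        by (simp only: c scale_left_diff_distrib[symmetric] left_diff_distrib mult.commute[of "\<beta> i"])
      ultimately show ?thesis by simp
    qed
    finally show ?case .
  qed
qed

end

theorem theorem7p1:
  fixes scale :: "'k::field \<Rightarrow> 'v::ab_group_add \<Rightarrow> 'v"
    and A As B Bs :: "'v \<Rightarrow> 'v"
    and q a as b bs :: 'k
    and d :: nat
    and Vs Vss :: "nat \<Rightarrow> 'v set"
  assumes "alg_closed_field TYPE('k)"
    and "vector_space scale"
    and "\<exists>S. finite S \<and> module.span scale S = UNIV"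
    and "(UNIV :: 'v set) \<noteq> {0}"
    and "q \<noteq> 0" and "\<forall>n::nat. n > 0 \<longrightarrow> q ^ n \<noteq> 1"
    and "tridiagonal_pair scale A As"
    and "standard_ordering scale A As d Vs"
    and "standard_ordering scale As A d Vss"
    and "a \<noteq> 0" and "as \<noteq> 0"
    and "\<forall>i\<le>d. Vs i = eigenspace scale A (a * q powi (2 * int i - int d))"
    and "\<forall>i\<le>d. Vss i = eigenspace scale As (as * q powi (int d - 2 * int i))"
    and "b \<noteq> 0" and "bs \<noteq> 0"
    and "is_decomposition scale d
           (\<lambda>i. module.span scale (\<Union>j\<le>i. Vss j) \<inter> module.span scale (\<Union>j\<le>d - i. Vs j))"
    and "is_decomposition scale d
           (\<lambda>i. module.span scale (\<Union>j\<in>{d - i..d}. Vss j) \<inter> module.span scale (\<Union>j\<in>{i..d}. Vs j))"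
    and "Vector_Spaces.linear scale scale B"
    and "\<forall>i\<le>d. \<forall>v \<in> module.span scale (\<Union>j\<le>i. Vss j) \<inter> module.span scale (\<Union>j\<le>d - i. Vs j).
           B v = scale (b * q powi (2 * int i - int d)) v"
    and "Vector_Spaces.linear scale scale Bs"
    and "\<forall>i\<le>d. \<forall>v \<in> module.span scale (\<Union>j\<in>{d - i..d}. Vss j) \<inter> module.span scale (\<Union>j\<in>{i..d}. Vs j).
           Bs v = scale (bs * q powi (int d - 2 * int i)) v"
  shows "(\<forall>v. scale (inverse (q - inverse q)) (scale q (A (B v)) - scale (inverse q) (B (A v)))
                = scale (a * b) v)
       \<and> (\<forall>v. scale (inverse (q - inverse q)) (scale q (B (As v)) - scale (inverse q) (As (B v)))
                = scale (as * b) v)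
       \<and> (\<forall>v. scale (inverse (q - inverse q)) (scale q (As (Bs v)) - scale (inverse q) (Bs (As v)))
                = scale (as * bs) v)
       \<and> (\<forall>v. scale (inverse (q - inverse q)) (scale q (Bs (A v)) - scale (inverse q) (A (Bs v)))
                = scale (a * bs) v)"
proof -
  interpret vs: vector_space scale by (rule assms(2))
  have linA: "Vector_Spaces.linear scale scale A" and linAs: "Vector_Spaces.linear scale scale As"
  proof -
    have "diagonalizable scale A \<and> diagonalizable scale As"
      using assms(7) unfolding tridiagonal_pair_def by (elim conjE) (intro conjI)
    then show "Vector_Spaces.linear scale scale A" "Vector_Spaces.linear scale scale As"
      unfolding diagonalizable_def by (rule conjunct1[OF conjunct1], rule conjunct1[OF conjunct2])
  qed
  have linB: "Vector_Spaces.linear scale scale B" by (rule assms(18))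
  have linBs: "Vector_Spaces.linear scale scale Bs" by (rule assms(20))
  interpret LB: Vector_Spaces.linear scale scale B by (rule linB)
  interpret LBs: Vector_Spaces.linear scale scale Bs by (rule linBs)
  have triA: "\<forall>i\<le>d. As ` Vs i \<subseteq> vs.span
        ((if 0 < i then Vs (i - 1) else {}) \<union> Vs i \<union> (if i < d then Vs (i + 1) else {}))"
    using assms(8) unfolding standard_ordering_def by (elim conjE) assumption
  have triAs: "\<forall>i\<le>d. A ` Vss i \<subseteq> vs.span
        ((if 0 < i then Vss (i - 1) else {}) \<union> Vss i \<union> (if i < d then Vss (i + 1) else {}))"
    using assms(9) unfolding standard_ordering_def by (elim conjE) assumption
  have eigA: "\<forall>j\<in>J. \<forall>v\<in>Vs j. A v = scale (a * q powi (2 * int j - int d)) v"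
    if "J \<subseteq> {..d}" for J
  proof (intro ballI)
    fix j v assume j: "j \<in> J" and v: "v \<in> Vs j"
    have "j \<le> d" using that j by auto
    then have "Vs j = eigenspace scale A (a * q powi (2 * int j - int d))" using assms(12) by simp
    with v show "A v = scale (a * q powi (2 * int j - int d)) v" by (simp add: eigenspace_def)
  qed
  have eigAs: "\<forall>j\<in>J. \<forall>v\<in>Vss j. As v = scale (as * q powi (int d - 2 * int j)) v"
    if "J \<subseteq> {..d}" for J
  proof (intro ballI)
    fix j v assume j: "j \<in> J" and v: "v \<in> Vss j"
    have "j \<le> d" using that j by auto
    then have "Vss j = eigenspace scale As (as * q powi (int d - 2 * int j))" using assms(13) by simp
    with v show "As v = scale (as * q powi (int d - 2 * int j)) v" by (simp add: eigenspace_def)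
  qed
  have q0: "q \<noteq> 0" by (rule assms(5))
  have qq: "q - inverse q \<noteq> 0"
  proof
    assume "q - inverse q = 0"
    then have "q * q = q * inverse q" by simp
    then have "q ^ 2 = 1" using q0 by (simp add: power2_eq_square)
    then show False using assms(6)[rule_format, of 2] by simp
  qed
  define U1 where "U1 = (\<lambda>i. vs.span (\<Union>j\<le>i. Vss j) \<inter> vs.span (\<Union>j\<le>d - i. Vs j))"
  define U2 where "U2 = (\<lambda>i. vs.span (\<Union>j\<in>{d - i..d}. Vss j) \<inter> vs.span (\<Union>j\<in>{i..d}. Vs j))"
  have sp1: "vs.span (\<Union>i\<le>d. U1 i) = UNIV"
    using assms(16) unfolding is_decomposition_def U1_def by (elim conjE) assumption
  have sp2: "vs.span (\<Union>i\<le>d. U2 i) = UNIV"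
    using assms(17) unfolding is_decomposition_def U2_def by (elim conjE) assumption
  have fin: "scale (inverse (q - inverse q)) (scale q x - scale (inverse q) y) = scale c v"
    if "scale q x - scale (inverse q) y = scale ((q - inverse q) * c) v" for x y c v
  proof -
    have "scale (inverse (q - inverse q)) (scale q x - scale (inverse q) y)
        = scale (inverse (q - inverse q)) (scale ((q - inverse q) * c) v)" by (simp only: that)
    also have "\<dots> = scale (inverse (q - inverse q) * ((q - inverse q) * c)) v" by (rule vs.scale_scale)
    also have "inverse (q - inverse q) * ((q - inverse q) * c) = c"
      using qq by (simp add: mult.assoc[symmetric])
    finally show ?thesis .
  qed

  have c1: "scale q (A (B v)) - scale (inverse q) (B (A v)) = scale ((q - inverse q) * (a * b)) v" for v
  proof (rule vs.qcomm_gen[OF linA linB sp1, where \<alpha> = "\<lambda>i. a * q powi (int d - 2 * int i)"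
        and \<beta> = "\<lambda>i. b * q powi (2 * int i - int d)" and \<gamma> = "\<lambda>i. b * q powi (2 * int i + 2 - int d)"])
    fix i assume i: "i \<le> d"
    show "a * q powi (int d - 2 * int i) * (b * q powi (2 * int i - int d)) = a * b \<and>
          q * (b * q powi (2 * int i - int d)) = inverse q * (b * q powi (2 * int i + 2 - int d))"
      by (intro conjI pw1 pw2) (simp_all add: q0)
  next
    fix i u assume i: "i \<le> d" and u: "u \<in> U1 i"
    show "B u = scale (b * q powi (2 * int i - int d)) u \<and>
      B (A u - scale (a * q powi (int d - 2 * int i)) u) =
      scale (b * q powi (2 * int i + 2 - int d)) (A u - scale (a * q powi (int d - 2 * int i)) u)"
    proof
      show "B u = scale (b * q powi (2 * int i - int d)) u" by (rule assms(19)[rule_format, OF i]) (use u in \<open>simp add: U1_def\<close>)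
    next
      define w where "w = A u - scale (a * q powi (int d - 2 * int i)) u"
      have uA: "u \<in> vs.span (\<Union>j\<le>d - i. Vs j)" and uS: "u \<in> vs.span (\<Union>j\<le>i. Vss j)"
        using u unfolding U1_def by simp_all
      have kc: "\<forall>j\<in>{..d - i}. j = d - i \<longrightarrow> a * q powi (2 * int j - int d) = a * q powi (int d - 2 * int i)"
        using i by (auto simp: of_nat_diff)
      show "B w = scale (b * q powi (2 * int i + 2 - int d)) w"
      proof (cases "i = d")
        case True
        have "w \<in> vs.span (\<Union>j\<in>{}. Vs j)"
          unfolding w_def
          by (rule vs.kill_lemma[where J = "{..d - i}" and k = "d - i", OF linA eigA kc _ uA]) (use True in auto)
        then have "w = 0" by simp
        then show ?thesis by (simp add: LB.zero)
      next
        case False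
        have w1: "w \<in> vs.span (\<Union>j\<le>d - (i + 1). Vs j)"
          unfolding w_def
          by (rule vs.kill_lemma[where J = "{..d - i}" and k = "d - i", OF linA eigA kc _ uA]) (use False i in auto)
        have Au: "A u \<in> vs.span (\<Union>j\<le>i + 1. Vss j)"
          apply (rule vs.image_lemma[where S = "\<lambda>j. (if 0 < j then Vss (j - 1) else {}) \<union> Vss j \<union> (if j < d then Vss (j + 1) else {})", OF linA _ _ uS])
          apply (intro ballI, rule triAs[rule_format])
          using i apply simp
          apply (rule nb_sub)
          using i by auto
        have "u \<in> vs.span (\<Union>j\<le>i + 1. Vss j)"
          using uS vs.span_mono[OF SUP_subset_mono[of "{..i}" "{..i + 1}" Vss Vss]] by auto
        then have w2: "w \<in> vs.span (\<Union>j\<le>i + 1. Vss j)"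
          unfolding w_def using Au by (intro vs.span_diff vs.span_scale)
        have "B w = scale (b * q powi (2 * int (i + 1) - int d)) w"
          by (rule assms(19)[rule_format]) (use False i in simp, use w1 w2 in blast)
        moreover have "2 * int (i + 1) - int d = 2 * int i + 2 - int d" using i by simp
        ultimately show ?thesis by (simp only:)
      qed
    qed
  qed

  have c2': "scale (inverse q) (As (B v)) - scale q (B (As v)) = scale ((inverse q - q) * (as * b)) v" for v
  proof (rule vs.qcomm_gen[OF linAs linB sp1, where \<alpha> = "\<lambda>i. as * q powi (int d - 2 * int i)"
        and \<beta> = "\<lambda>i. b * q powi (2 * int i - int d)" and \<gamma> = "\<lambda>i. b * q powi (2 * int i - 2 - int d)"])
    fix i assume i: "i \<le> d"
    show "as * q powi (int d - 2 * int i) * (b * q powi (2 * int i - int d)) = as * b \<and>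
          inverse q * (b * q powi (2 * int i - int d)) = q * (b * q powi (2 * int i - 2 - int d))"
      by (intro conjI pw1 pw2[symmetric]) (simp_all add: q0)
  next
    fix i u assume i: "i \<le> d" and u: "u \<in> U1 i"
    show "B u = scale (b * q powi (2 * int i - int d)) u \<and>
      B (As u - scale (as * q powi (int d - 2 * int i)) u) =
      scale (b * q powi (2 * int i - 2 - int d)) (As u - scale (as * q powi (int d - 2 * int i)) u)"
    proof
      show "B u = scale (b * q powi (2 * int i - int d)) u" by (rule assms(19)[rule_format, OF i]) (use u in \<open>simp add: U1_def\<close>)
    next
      define w where "w = As u - scale (as * q powi (int d - 2 * int i)) u"
      have uA: "u \<in> vs.span (\<Union>j\<le>d - i. Vs j)" and uS: "u \<in> vs.span (\<Union>j\<le>i. Vss j)"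
        using u unfolding U1_def by simp_all
      have kc: "\<forall>j\<in>{..i}. j = i \<longrightarrow> as * q powi (int d - 2 * int j) = as * q powi (int d - 2 * int i)"
        by auto
      show "B w = scale (b * q powi (2 * int i - 2 - int d)) w"
      proof (cases "i = 0")
        case True
        have "w \<in> vs.span (\<Union>j\<in>{}. Vss j)"
          unfolding w_def
          by (rule vs.kill_lemma[where J = "{..i}" and k = "i", OF linAs eigAs kc _ uS]) (use True i in auto)
        then have "w = 0" by simp
        then show ?thesis by (simp add: LB.zero)
      next
        case False
        have w1: "w \<in> vs.span (\<Union>j\<le>i - 1. Vss j)"
          unfolding w_def
          by (rule vs.kill_lemma[where J = "{..i}" and k = "i", OF linAs eigAs kc _ uS]) (use False i in auto)
        have Au: "As u \<in> vs.span (\<Union>j\<le>d - (i - 1). Vs j)"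
          apply (rule vs.image_lemma[where S = "\<lambda>j. (if 0 < j then Vs (j - 1) else {}) \<union> Vs j \<union> (if j < d then Vs (j + 1) else {})", OF linAs _ _ uA])
          apply (intro ballI, rule triA[rule_format])
          using i apply simp
          apply (rule nb_sub)
          using i False by auto
        have "u \<in> vs.span (\<Union>j\<le>d - (i - 1). Vs j)"
          using uA vs.span_mono[OF SUP_subset_mono[of "{..d - i}" "{..d - (i - 1)}" Vs Vs]] diff_le_mono2[of "i - 1" i d] by auto
        then have w2: "w \<in> vs.span (\<Union>j\<le>d - (i - 1). Vs j)"
          unfolding w_def using Au by (intro vs.span_diff vs.span_scale)
        have "B w = scale (b * q powi (2 * int (i - 1) - int d)) w"
          by (rule assms(19)[rule_format]) (use False i in simp, use w1 w2 in blast)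
        moreover have "2 * int (i - 1) - int d = 2 * int i - 2 - int d" using False by simp
        ultimately show ?thesis by (simp only:)
      qed
    qed
  qed

  have c3: "scale q (As (Bs v)) - scale (inverse q) (Bs (As v)) = scale ((q - inverse q) * (as * bs)) v" for v
  proof (rule vs.qcomm_gen[OF linAs linBs sp2, where \<alpha> = "\<lambda>i. as * q powi (2 * int i - int d)"
        and \<beta> = "\<lambda>i. bs * q powi (int d - 2 * int i)" and \<gamma> = "\<lambda>i. bs * q powi (int d - 2 * int i + 2)"])
    fix i assume i: "i \<le> d"
    show "as * q powi (2 * int i - int d) * (bs * q powi (int d - 2 * int i)) = as * bs \<and>
          q * (bs * q powi (int d - 2 * int i)) = inverse q * (bs * q powi (int d - 2 * int i + 2))"
      by (intro conjI pw1 pw2) (simp_all add: q0)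
  next
    fix i u assume i: "i \<le> d" and u: "u \<in> U2 i"
    show "Bs u = scale (bs * q powi (int d - 2 * int i)) u \<and>
      Bs (As u - scale (as * q powi (2 * int i - int d)) u) =
      scale (bs * q powi (int d - 2 * int i + 2)) (As u - scale (as * q powi (2 * int i - int d)) u)"
    proof
      show "Bs u = scale (bs * q powi (int d - 2 * int i)) u" by (rule assms(21)[rule_format, OF i]) (use u in \<open>simp add: U2_def\<close>)
    next
      define w where "w = As u - scale (as * q powi (2 * int i - int d)) u"
      have uA: "u \<in> vs.span (\<Union>j\<in>{i..d}. Vs j)" and uS: "u \<in> vs.span (\<Union>j\<in>{d - i..d}. Vss j)"
        using u unfolding U2_def by simp_all
      have kc: "\<forall>j\<in>{d - i..d}. j = d - i \<longrightarrow> as * q powi (int d - 2 * int j) = as * q powi (2 * int i - int d)"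
        using i by (auto simp: of_nat_diff)
      show "Bs w = scale (bs * q powi (int d - 2 * int i + 2)) w"
      proof (cases "i = 0")
        case True
        have "w \<in> vs.span (\<Union>j\<in>{}. Vss j)"
          unfolding w_def
          by (rule vs.kill_lemma[where J = "{d - i..d}" and k = "d - i", OF linAs eigAs kc _ uS]) (use True i in auto)
        then have "w = 0" by simp
        then show ?thesis by (simp add: LBs.zero)
      next
        case False
        have w1: "w \<in> vs.span (\<Union>j\<in>{d - (i - 1)..d}. Vss j)"
          unfolding w_def
          by (rule vs.kill_lemma[where J = "{d - i..d}" and k = "d - i", OF linAs eigAs kc _ uS]) (use False i in auto)
        have Au: "As u \<in> vs.span (\<Union>j\<in>{i - 1..d}. Vs j)"
          apply (rule vs.image_lemma[where S = "\<lambda>j. (if 0 < j then Vs (j - 1) else {}) \<union> Vs j \<union> (if j < d then Vs (j + 1) else {})", OF linAs _ _ uA])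
          apply (intro ballI, rule triA[rule_format])
          using i apply simp
          apply (rule nb_sub)
          using i False by auto
        have "u \<in> vs.span (\<Union>j\<in>{i - 1..d}. Vs j)"
          using uA vs.span_mono[OF SUP_subset_mono[of "{i..d}" "{i - 1..d}" Vs Vs]] by auto
        then have w2: "w \<in> vs.span (\<Union>j\<in>{i - 1..d}. Vs j)"
          unfolding w_def using Au by (intro vs.span_diff vs.span_scale)
        have "Bs w = scale (bs * q powi (int d - 2 * int (i - 1))) w"
          by (rule assms(21)[rule_format]) (use False i in simp, use w1 w2 in blast)
        moreover have "int d - 2 * int (i - 1) = int d - 2 * int i + 2" using False by simp
        ultimately show ?thesis by (simp only:)
      qed
    qed
  qed

  have c4': "scale (inverse q) (A (Bs v)) - scale q (Bs (A v)) = scale ((inverse q - q) * (a * bs)) v" for v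
  proof (rule vs.qcomm_gen[OF linA linBs sp2, where \<alpha> = "\<lambda>i. a * q powi (2 * int i - int d)"
        and \<beta> = "\<lambda>i. bs * q powi (int d - 2 * int i)" and \<gamma> = "\<lambda>i. bs * q powi (int d - 2 * int i - 2)"])
    fix i assume i: "i \<le> d"
    show "a * q powi (2 * int i - int d) * (bs * q powi (int d - 2 * int i)) = a * bs \<and>
          inverse q * (bs * q powi (int d - 2 * int i)) = q * (bs * q powi (int d - 2 * int i - 2))"
      by (intro conjI pw1 pw2[symmetric]) (simp_all add: q0)
  next
    fix i u assume i: "i \<le> d" and u: "u \<in> U2 i"
    show "Bs u = scale (bs * q powi (int d - 2 * int i)) u \<and>
      Bs (A u - scale (a * q powi (2 * int i - int d)) u) =
      scale (bs * q powi (int d - 2 * int i - 2)) (A u - scale (a * q powi (2 * int i - int d)) u)"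
    proof
      show "Bs u = scale (bs * q powi (int d - 2 * int i)) u" by (rule assms(21)[rule_format, OF i]) (use u in \<open>simp add: U2_def\<close>)
    next
      define w where "w = A u - scale (a * q powi (2 * int i - int d)) u"
      have uA: "u \<in> vs.span (\<Union>j\<in>{i..d}. Vs j)" and uS: "u \<in> vs.span (\<Union>j\<in>{d - i..d}. Vss j)"
        using u unfolding U2_def by simp_all
      have kc: "\<forall>j\<in>{i..d}. j = i \<longrightarrow> a * q powi (2 * int j - int d) = a * q powi (2 * int i - int d)"
        by auto
      show "Bs w = scale (bs * q powi (int d - 2 * int i - 2)) w"
      proof (cases "i = d")
        case True
        have "w \<in> vs.span (\<Union>j\<in>{}. Vs j)"
          unfolding w_def
          by (rule vs.kill_lemma[where J = "{i..d}" and k = "i", OF linA eigA kc _ uA]) (use True i in auto)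
        then have "w = 0" by simp
        then show ?thesis by (simp add: LBs.zero)
      next
        case False
        have w1: "w \<in> vs.span (\<Union>j\<in>{i + 1..d}. Vs j)"
          unfolding w_def
          by (rule vs.kill_lemma[where J = "{i..d}" and k = "i", OF linA eigA kc _ uA]) (use False i in auto)
        have Au: "A u \<in> vs.span (\<Union>j\<in>{d - (i + 1)..d}. Vss j)"
          apply (rule vs.image_lemma[where S = "\<lambda>j. (if 0 < j then Vss (j - 1) else {}) \<union> Vss j \<union> (if j < d then Vss (j + 1) else {})", OF linA _ _ uS])
          apply (intro ballI, rule triAs[rule_format])
          using i apply simp
          apply (rule nb_sub)
          using i False by auto
        have "u \<in> vs.span (\<Union>j\<in>{d - (i + 1)..d}. Vss j)"
          using uS vs.span_mono[OF SUP_subset_mono[of "{d - i..d}" "{d - (i + 1)..d}" Vss Vss]] diff_le_mono2[of i "i + 1" d] by auto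
        then have w2: "w \<in> vs.span (\<Union>j\<in>{d - (i + 1)..d}. Vss j)"
          unfolding w_def using Au by (intro vs.span_diff vs.span_scale)
        have "Bs w = scale (bs * q powi (int d - 2 * int (i + 1))) w"
          by (rule assms(21)[rule_format]) (use False i in simp, use w1 w2 in blast)
        moreover have "int d - 2 * int (i + 1) = int d - 2 * int i - 2" using i by simp
        ultimately show ?thesis by (simp only:)
      qed
    qed
  qed
  have r1: "scale (inverse (q - inverse q)) (scale q (A (B v)) - scale (inverse q) (B (A v)))
                = scale (a * b) v" for v
    by (rule fin[OF c1])
  have r2: "scale (inverse (q - inverse q)) (scale q (B (As v)) - scale (inverse q) (As (B v)))
                = scale (as * b) v" for v
    by (rule fin[OF vs.flip_lemma[OF c2']])
  have r3: "scale (inverse (q - inverse q)) (scale q (As (Bs v)) - scale (inverse q) (Bs (As v)))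
                = scale (as * bs) v" for v
    by (rule fin[OF c3])
  have r4: "scale (inverse (q - inverse q)) (scale q (Bs (A v)) - scale (inverse q) (A (Bs v)))
                = scale (a * bs) v" for v
    by (rule fin[OF vs.flip_lemma[OF c4']])
  show ?thesis
    by (intro conjI allI r1 r2 r3 r4)
qed

end
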